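(* For every $n\ge1$ there is a bijection $\sigma\mapsto\sigma'$ from $\mathcal{X}_{2n}$ onto $\mathcal{R}_{2n}$ such that $\mathrm{drop}(\sigma')=\mathrm{des}(\sigma)$. In particular $|\mathcal{X}_{2n}|=|\mathcal{R}_{2n}|$.
   Context: For $\sigma\in\mathfrak{S}_m$ (permutations of $[m]$), a descent is an index $i$ with $\sigma_i>\sigma_{i+1}$ (descent pair $(\sigma_i,\sigma_{i+1})$), $\mathrm{des}(\sigma)$ is the number of descents; $\mathcal{X}_{2n}$ is the set of permutations of $[2n]$ whose every descent pair $(\sigma_i,\sigma_{i+1})$ has $\sigma_i$ even and $\sigma_{i+1}$ odd. A drop of $\sigma$ is a pair $(i,\sigma_i)$ with $i>\sigma_i$ ($i$ is the drop top, $\sigma_i$ the drop bottom); $\mathrm{drop}(\sigma)$ is the number of drops. A drop is even-odd if $i$ is even and $\sigma_i$ is odd. $\mathcal{R}_{2n}$ is the set of permutations of $[2n]$ all of whose drops are even-odd. *)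

theory Defs
  imports "HOL-Combinatorics.Permutations"
begin

(* Permutations of [m] = {1..m} are functions sigma :: nat => nat with sigma permutes {1..m};
   sigma i is the i-th letter of the one-line notation. *)

definition perms :: "nat \<Rightarrow> (nat \<Rightarrow> nat) set" where
  "perms m = {\<sigma>. \<sigma> permutes {1..m}}"

definition descents :: "nat \<Rightarrow> (nat \<Rightarrow> nat) \<Rightarrow> nat set" where
  "descents m \<sigma> = {i. 1 \<le> i \<and> i < m \<and> \<sigma> i > \<sigma> (Suc i)}"

definition des :: "nat \<Rightarrow> (nat \<Rightarrow> nat) \<Rightarrow> nat" where
  "des m \<sigma> = card (descents m \<sigma>)"

definition drops :: "nat \<Rightarrow> (nat \<Rightarrow> nat) \<Rightarrow> nat set" where
  "drops m \<sigma> = {i. 1 \<le> i \<and> i \<le> m \<and> i > \<sigma> i}"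

definition drop_num :: "nat \<Rightarrow> (nat \<Rightarrow> nat) \<Rightarrow> nat" where
  "drop_num m \<sigma> = card (drops m \<sigma>)"

definition X_set :: "nat \<Rightarrow> (nat \<Rightarrow> nat) set" where
  "X_set n = {\<sigma> \<in> perms (2*n). \<forall>i \<in> descents (2*n) \<sigma>. even (\<sigma> i) \<and> odd (\<sigma> (Suc i))}"

definition R_set :: "nat \<Rightarrow> (nat \<Rightarrow> nat) set" where
  "R_set n = {\<sigma> \<in> perms (2*n). \<forall>i \<in> drops (2*n) \<sigma>. even i \<and> odd (\<sigma> i)}"

end

theory Submission imports Defs begin

definition DP :: "nat \<Rightarrow> (nat \<Rightarrow> nat) \<Rightarrow> (nat \<times> nat) set" where
  "DP m \<sigma> = (\<lambda>i. (\<sigma> i, \<sigma> (Suc i))) ` descents m \<sigma>"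

definition DrP :: "nat \<Rightarrow> (nat \<Rightarrow> nat) \<Rightarrow> (nat \<times> nat) set" where
  "DrP m \<tau> = (\<lambda>i. (i, \<tau> i)) ` drops m \<tau>"

lemma card_DP: "inj \<sigma> \<Longrightarrow> card (DP m \<sigma>) = des m \<sigma>"
  unfolding DP_def des_def
  by (rule card_image) (auto simp: inj_on_def inj_eq)

lemma card_DrP: "card (DrP m \<tau>) = drop_num m \<tau>"
  unfolding DrP_def drop_num_def
  by (rule card_image) (auto simp: inj_on_def)

lemma mem_DrP: "(x, y) \<in> DrP m \<tau> \<longleftrightarrow> 1 \<le> x \<and> x \<le> m \<and> \<tau> x = y \<and> y < x"
  unfolding DrP_def drops_def by auto

lemma mem_DP: "(x, y) \<in> DP m \<sigma> \<longleftrightarrow> (\<exists>i. 1 \<le> i \<and> i < m \<and> \<sigma> i = x \<and> \<sigma> (Suc i) = y \<and> y < x)"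
  unfolding DP_def descents_def by auto

lemma DrP_last:
  assumes "\<tau> permutes {1..m}"
  shows "DrP (Suc m) \<tau> = DrP m \<tau>"
proof -
  have "\<tau> (Suc m) = Suc m" using permutes_not_in[OF assms] by auto
  then show ?thesis by (auto simp: mem_DrP le_Suc_eq)
qed

lemma DrP_step:
  assumes t: "\<tau> permutes {1..m}" and b: "b \<in> {1..m}"
  shows "DrP (Suc m) (Transposition.transpose (Suc m) b \<circ> \<tau>) = {q \<in> DrP m \<tau>. snd q \<noteq> b} \<union> {(Suc m, b)}"
proof -
  have fix1: "\<tau> (Suc m) = Suc m" using permutes_not_in[OF t] by auto
  have inr: "x \<in> {1..m} \<Longrightarrow> \<tau> x \<in> {1..m}" for x using permutes_in_image[OF t] by auto
  show ?thesis
  proof (intro set_eqI, clarify)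
    fix x y
    show "(x, y) \<in> DrP (Suc m) (Transposition.transpose (Suc m) b \<circ> \<tau>) \<longleftrightarrow> (x, y) \<in> {q \<in> DrP m \<tau>. snd q \<noteq> b} \<union> {(Suc m, b)}"
    proof (cases "x = Suc m")
      case True
      then show ?thesis using fix1 b by (auto simp: mem_DrP transpose_def)
    next
      case False
      show ?thesis
      proof (cases "1 \<le> x \<and> x \<le> m")
        case True
        then have "\<tau> x \<in> {1..m}" using inr by auto
        then show ?thesis using True False b by (auto simp: mem_DrP transpose_def)
      next
        case F2: False
        then show ?thesis using False by (auto simp: mem_DrP)
      qed
    qed
  qed
qed

definition rem :: "nat \<Rightarrow> (nat \<Rightarrow> nat) \<Rightarrow> nat \<Rightarrow> nat" where
  "rem m \<sigma> = (\<lambda>i. if i < inv \<sigma> (Suc m) then \<sigma> i else if i \<le> m then \<sigma> (Suc i) else i)"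

lemma pos_facts:
  assumes s: "\<sigma> permutes {1..Suc m}"
  shows "inv \<sigma> (Suc m) \<in> {1..Suc m}" "\<sigma> (inv \<sigma> (Suc m)) = Suc m"
  using permutes_in_image[OF permutes_inv[OF s]] permutes_inverses[OF s] by auto

lemma rem_h:
  assumes s: "\<sigma> permutes {1..Suc m}" and i: "i \<in> {1..m}"
  shows "rem m \<sigma> i = \<sigma> (if i < inv \<sigma> (Suc m) then i else Suc i)"
  using i unfolding rem_def by auto

lemma rem_perm:
  assumes s: "\<sigma> permutes {1..Suc m}"
  shows "rem m \<sigma> permutes {1..m}"
proof (rule bij_imp_permutes)
  define p where "p = inv \<sigma> (Suc m)"
  have p: "p \<in> {1..Suc m}" "\<sigma> p = Suc m" using pos_facts[OF s] p_def by auto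
  have inj: "inj \<sigma>" using permutes_inj[OF s] .
  have img: "\<And>x. x \<in> {1..Suc m} \<Longrightarrow> \<sigma> x \<in> {1..Suc m}" using permutes_in_image[OF s] by auto
  have ne: "\<And>x. x \<noteq> p \<Longrightarrow> \<sigma> x \<noteq> Suc m" using inj p(2) by (metis injD)
  have sub: "rem m \<sigma> ` {1..m} \<subseteq> {1..m}"
  proof
    fix y assume "y \<in> rem m \<sigma> ` {1..m}"
    then obtain i where i: "i \<in> {1..m}" "y = rem m \<sigma> i" by auto
    define h where "h = (if i < p then i else Suc i)"
    have "h \<in> {1..Suc m}" "h \<noteq> p" using i p unfolding h_def by auto
    then have "\<sigma> h \<in> {1..Suc m}" "\<sigma> h \<noteq> Suc m" using img ne by auto
    moreover have "y = \<sigma> h" using rem_h[OF s i(1)] i(2) unfolding h_def p_def by simp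
    ultimately show "y \<in> {1..m}" by auto
  qed
  have injr: "inj_on (rem m \<sigma>) {1..m}"
  proof (rule inj_onI)
    fix i j assume i: "i \<in> {1..m}" and j: "j \<in> {1..m}" and e: "rem m \<sigma> i = rem m \<sigma> j"
    have "(if i < p then i else Suc i) = (if j < p then j else Suc j)"
      using e rem_h[OF s i] rem_h[OF s j] inj unfolding p_def by (simp add: inj_eq)
    then show "i = j" by (auto split: if_splits)
  qed
  show "bij_betw (rem m \<sigma>) {1..m} {1..m}"
    unfolding bij_betw_def using injr endo_inj_surj[OF _ sub injr] by auto
  fix x assume "x \<notin> {1..m}"
  moreover have "\<sigma> 0 = 0" using permutes_not_in[OF s] by auto
  ultimately show "rem m \<sigma> x = x" using p unfolding rem_def p_def by (cases "x = 0") auto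
qed

lemma DP_last:
  assumes s: "\<sigma> permutes {1..Suc m}" and p: "inv \<sigma> (Suc m) = Suc m"
  shows "DP (Suc m) \<sigma> = DP m (rem m \<sigma>)"
proof -
  have sp: "\<sigma> (Suc m) = Suc m" using pos_facts[OF s] p by simp
  have img: "\<And>x. x \<in> {1..Suc m} \<Longrightarrow> \<sigma> x \<in> {1..Suc m}" using permutes_in_image[OF s] by auto
  have r: "\<And>i. i \<le> m \<Longrightarrow> rem m \<sigma> i = \<sigma> i" "\<And>i. i < m \<Longrightarrow> rem m \<sigma> (Suc i) = \<sigma> (Suc i)"
    unfolding rem_def p by auto
  show ?thesis
  proof (intro set_eqI, clarify)
    fix x y
    show "(x, y) \<in> DP (Suc m) \<sigma> \<longleftrightarrow> (x, y) \<in> DP m (rem m \<sigma>)"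
    proof
      assume "(x, y) \<in> DP (Suc m) \<sigma>"
      then obtain i where i: "1 \<le> i" "i < Suc m" "\<sigma> i = x" "\<sigma> (Suc i) = y" "y < x"
        unfolding mem_DP by blast
      have "i \<noteq> m"
      proof
        assume "i = m"
        then have "y = Suc m" using sp i by simp
        moreover have "x \<le> Suc m" using img[of i] i by auto
        ultimately show False using i by simp
      qed
      then show "(x, y) \<in> DP m (rem m \<sigma>)" unfolding mem_DP using i r
        by (intro exI[of _ i]) auto
    next
      assume "(x, y) \<in> DP m (rem m \<sigma>)"
      then obtain i where i: "1 \<le> i" "i < m" "rem m \<sigma> i = x" "rem m \<sigma> (Suc i) = y" "y < x"
        unfolding mem_DP by blast
      then show "(x, y) \<in> DP (Suc m) \<sigma>" unfolding mem_DP using r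
        by (intro exI[of _ i]) auto
    qed
  qed
qed

lemma DP_step:
  assumes s: "\<sigma> permutes {1..Suc m}" and p: "inv \<sigma> (Suc m) \<le> m"
  shows "DP (Suc m) \<sigma> = {q \<in> DP m (rem m \<sigma>). snd q \<noteq> \<sigma> (Suc (inv \<sigma> (Suc m)))} \<union> {(Suc m, \<sigma> (Suc (inv \<sigma> (Suc m))))}"
proof -
  define p where "p = inv \<sigma> (Suc m)"
  have pp: "p \<in> {1..Suc m}" "\<sigma> p = Suc m" using pos_facts[OF s] p_def by auto
  have inj: "inj \<sigma>" using permutes_inj[OF s] .
  have img: "\<And>x. x \<in> {1..Suc m} \<Longrightarrow> \<sigma> x \<in> {1..Suc m}" using permutes_in_image[OF s] by auto
  have ne: "\<And>x. x \<noteq> p \<Longrightarrow> \<sigma> x \<noteq> Suc m" using inj pp(2) by (metis injD)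
  have r1: "\<And>i. i < p \<Longrightarrow> rem m \<sigma> i = \<sigma> i" unfolding rem_def p_def by auto
  have r2: "\<And>i. p \<le> i \<Longrightarrow> i \<le> m \<Longrightarrow> rem m \<sigma> i = \<sigma> (Suc i)" unfolding rem_def p_def by auto
  have pm: "p \<le> m" using p p_def by simp
  have bsm: "\<sigma> (Suc p) < Suc m" using img[of "Suc p"] ne[of "Suc p"] pm by force
  show ?thesis unfolding p_def[symmetric]
  proof (intro set_eqI, clarify)
    fix x y
    show "(x, y) \<in> DP (Suc m) \<sigma> \<longleftrightarrow> (x, y) \<in> {q \<in> DP m (rem m \<sigma>). snd q \<noteq> \<sigma> (Suc p)} \<union> {(Suc m, \<sigma> (Suc p))}"
    proof
      assume "(x, y) \<in> DP (Suc m) \<sigma>"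
      then obtain i where i: "1 \<le> i" "i < Suc m" "\<sigma> i = x" "\<sigma> (Suc i) = y" "y < x"
        unfolding mem_DP by blast
      consider "Suc i < p" | "Suc i = p" | "i = p" | "p < i" by linarith
      then show "(x, y) \<in> {q \<in> DP m (rem m \<sigma>). snd q \<noteq> \<sigma> (Suc p)} \<union> {(Suc m, \<sigma> (Suc p))}"
      proof cases
        case 1
        have "y \<noteq> \<sigma> (Suc p)" using i(4) 1 inj by (auto simp: inj_eq)
        moreover have "(x, y) \<in> DP m (rem m \<sigma>)" unfolding mem_DP using i 1 r1 pm
          by (intro exI[of _ i]) auto
        ultimately show ?thesis by auto
      next
        case 2
        then have "y = Suc m" using i pp by simp
        moreover have "x \<le> Suc m" using img[of i] i by auto
        ultimately show ?thesis using i by simp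
      next
        case 3
        then show ?thesis using i pp by auto
      next
        case 4
        have "y \<noteq> \<sigma> (Suc p)" using i(4) 4 inj by (auto simp: inj_eq)
        moreover have "(x, y) \<in> DP m (rem m \<sigma>)" unfolding mem_DP using i 4 r2 pm pp
          by (intro exI[of _ "i - 1"]) auto
        ultimately show ?thesis by auto
      qed
    next
      assume "(x, y) \<in> {q \<in> DP m (rem m \<sigma>). snd q \<noteq> \<sigma> (Suc p)} \<union> {(Suc m, \<sigma> (Suc p))}"
      then consider "(x, y) = (Suc m, \<sigma> (Suc p))" | "(x, y) \<in> DP m (rem m \<sigma>)" "y \<noteq> \<sigma> (Suc p)" by auto
      then show "(x, y) \<in> DP (Suc m) \<sigma>"
      proof cases
        case 1
        then show ?thesis unfolding mem_DP using pp pm bsm by (intro exI[of _ p]) auto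
      next
        case 2
        then obtain j where j: "1 \<le> j" "j < m" "rem m \<sigma> j = x" "rem m \<sigma> (Suc j) = y" "y < x"
          unfolding mem_DP by blast
        consider "Suc j < p" | "Suc j = p" | "p \<le> j" by linarith
        then show ?thesis
        proof cases
          case 1
          then show ?thesis unfolding mem_DP using j r1 by (intro exI[of _ j]) auto
        next
          case c: 2
          then have "y = \<sigma> (Suc p)" using j r2[of p] pm by simp
          then show ?thesis using 2 by simp
        next
          case 3
          then show ?thesis unfolding mem_DP using j r2 by (intro exI[of _ "Suc j"]) auto
        qed
      qed
    qed
  qed
qed


definition bb :: "nat \<Rightarrow> (nat \<Rightarrow> nat) \<Rightarrow> nat" where
  "bb m \<sigma> = (if inv \<sigma> (Suc m) = Suc m then Suc m else \<sigma> (Suc (inv \<sigma> (Suc m))))"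

lemma bb_facts:
  assumes s: "\<sigma> permutes {1..Suc m}"
  shows "inv \<sigma> (Suc m) \<le> m \<Longrightarrow> bb m \<sigma> \<in> {1..m}"
    and "bb m \<sigma> = Suc m \<longleftrightarrow> inv \<sigma> (Suc m) = Suc m"
    and "inv \<sigma> (Suc m) \<le> m \<Longrightarrow> rem m \<sigma> (inv \<sigma> (Suc m)) = bb m \<sigma>"
proof -
  define p where "p = inv \<sigma> (Suc m)"
  have pp: "p \<in> {1..Suc m}" "\<sigma> p = Suc m" using pos_facts[OF s] p_def by auto
  have inj: "inj \<sigma>" using permutes_inj[OF s] .
  have img: "\<And>x. x \<in> {1..Suc m} \<Longrightarrow> \<sigma> x \<in> {1..Suc m}" using permutes_in_image[OF s] by auto
  have ne: "\<And>x. x \<noteq> p \<Longrightarrow> \<sigma> x \<noteq> Suc m" using inj pp(2) by (metis injD)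
  have bsm: "p \<le> m \<Longrightarrow> \<sigma> (Suc p) \<in> {1..m}" using img[of "Suc p"] ne[of "Suc p"] by force
  show "inv \<sigma> (Suc m) \<le> m \<Longrightarrow> bb m \<sigma> \<in> {1..m}"
    using bsm unfolding bb_def p_def[symmetric] by auto
  show "bb m \<sigma> = Suc m \<longleftrightarrow> inv \<sigma> (Suc m) = Suc m"
    using bsm pp unfolding bb_def p_def[symmetric] by auto
  show "inv \<sigma> (Suc m) \<le> m \<Longrightarrow> rem m \<sigma> (inv \<sigma> (Suc m)) = bb m \<sigma>"
    unfolding bb_def rem_def p_def[symmetric] by auto
qed

lemma rem_inj:
  assumes s1: "\<sigma>1 permutes {1..Suc m}" and s2: "\<sigma>2 permutes {1..Suc m}"
    and r: "rem m \<sigma>1 = rem m \<sigma>2" and b: "bb m \<sigma>1 = bb m \<sigma>2"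
  shows "\<sigma>1 = \<sigma>2"
proof -
  define p1 where "p1 = inv \<sigma>1 (Suc m)"
  define p2 where "p2 = inv \<sigma>2 (Suc m)"
  have pp1: "p1 \<in> {1..Suc m}" "\<sigma>1 p1 = Suc m" using pos_facts[OF s1] p1_def by auto
  have pp2: "p2 \<in> {1..Suc m}" "\<sigma>2 p2 = Suc m" using pos_facts[OF s2] p2_def by auto
  have injr: "inj (rem m \<sigma>1)" using permutes_inj[OF rem_perm[OF s1]] .
  have peq: "p1 = p2"
  proof (cases "p1 = Suc m")
    case True
    then show ?thesis using bb_facts(2)[OF s1] bb_facts(2)[OF s2] b p1_def p2_def by auto
  next
    case False
    then have "p2 \<noteq> Suc m" using bb_facts(2)[OF s1] bb_facts(2)[OF s2] b p1_def p2_def by auto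
    then have "p1 \<le> m" "p2 \<le> m" using pp1 pp2 False by auto
    then have "rem m \<sigma>1 p1 = rem m \<sigma>1 p2"
      using bb_facts(3)[OF s1] bb_facts(3)[OF s2] b r p1_def p2_def by auto
    then show ?thesis using injr by (auto simp: inj_eq)
  qed
  have z1: "\<And>i. i \<notin> {1..Suc m} \<Longrightarrow> \<sigma>1 i = i" using permutes_not_in[OF s1] by auto
  have z2: "\<And>i. i \<notin> {1..Suc m} \<Longrightarrow> \<sigma>2 i = i" using permutes_not_in[OF s2] by auto
  show ?thesis
  proof
    fix i
    consider "i < p1" | "i = p1" | "p1 < i" "i \<le> Suc m" | "Suc m < i" by linarith
    then show "\<sigma>1 i = \<sigma>2 i"
    proof cases
      case 1
      then show ?thesis using fun_cong[OF r, of i] peq unfolding rem_def p1_def p2_def by auto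
    next
      case 2
      then show ?thesis using pp1 pp2 peq by simp
    next
      case 3
      then have "rem m \<sigma>1 (i - 1) = \<sigma>1 i" "rem m \<sigma>2 (i - 1) = \<sigma>2 i"
        using peq unfolding rem_def p1_def p2_def by auto
      then show ?thesis using r by simp
    next
      case 4
      then show ?thesis using z1 z2 by auto
    qed
  qed
qed

lemma main_bij:
  "\<exists>F. bij_betw F (perms m) (perms m) \<and> (\<forall>\<sigma>\<in>perms m. DrP m (F \<sigma>) = DP m \<sigma>)"
proof (induction m)
  case 0
  show ?case
  proof (rule exI[of _ id], intro conjI ballI)
    show "bij_betw id (perms 0) (perms 0)" by (rule bij_betw_id)
    fix \<sigma> show "DrP 0 (id \<sigma>) = DP 0 \<sigma>" by (auto simp: DP_def DrP_def descents_def drops_def)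
  qed
next
  case (Suc m)
  then obtain F where F: "bij_betw F (perms m) (perms m)" "\<forall>\<sigma>\<in>perms m. DrP m (F \<sigma>) = DP m \<sigma>"
    by blast
  define G where "G = (\<lambda>\<sigma>. Transposition.transpose (Suc m) (bb m \<sigma>) \<circ> F (rem m \<sigma>))"
  have Fp: "\<And>\<sigma>. \<sigma> permutes {1..Suc m} \<Longrightarrow> F (rem m \<sigma>) permutes {1..m}"
    using F(1) rem_perm unfolding bij_betw_def perms_def by blast
  have bbin: "\<And>\<sigma>. \<sigma> permutes {1..Suc m} \<Longrightarrow> bb m \<sigma> \<in> {1..Suc m}"
  proof -
    fix \<sigma> assume s: "\<sigma> permutes {1..Suc m}"
    show "bb m \<sigma> \<in> {1..Suc m}"
      using bb_facts(1)[OF s] bb_facts(2)[OF s] pos_facts(1)[OF s] by (cases "inv \<sigma> (Suc m) = Suc m") auto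
  qed
  have Gp: "G \<sigma> \<in> perms (Suc m)" if s: "\<sigma> \<in> perms (Suc m)" for \<sigma>
  proof -
    have s': "\<sigma> permutes {1..Suc m}" using s perms_def by auto
    have "F (rem m \<sigma>) permutes {1..Suc m}" using permutes_subset[OF Fp[OF s']] by auto
    moreover have "Transposition.transpose (Suc m) (bb m \<sigma>) permutes {1..Suc m}"
      using bbin[OF s'] by (intro permutes_swap_id) auto
    ultimately show ?thesis unfolding G_def perms_def by (auto intro: permutes_compose)
  qed
  have Gd: "DrP (Suc m) (G \<sigma>) = DP (Suc m) \<sigma>" if s: "\<sigma> \<in> perms (Suc m)" for \<sigma>
  proof -
    have s': "\<sigma> permutes {1..Suc m}" using s perms_def by auto
    have rp: "rem m \<sigma> \<in> perms m" using rem_perm[OF s'] perms_def by auto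
    show ?thesis
    proof (cases "inv \<sigma> (Suc m) = Suc m")
      case True
      then have "bb m \<sigma> = Suc m" unfolding bb_def by simp
      then have "G \<sigma> = F (rem m \<sigma>)" unfolding G_def by simp
      then show ?thesis using DrP_last[OF Fp[OF s']] DP_last[OF s' True] F(2) rp by simp
    next
      case False
      then have pm: "inv \<sigma> (Suc m) \<le> m" using pos_facts(1)[OF s'] by auto
      have "bb m \<sigma> = \<sigma> (Suc (inv \<sigma> (Suc m)))" unfolding bb_def using False by simp
      then show ?thesis unfolding G_def
        using DrP_step[OF Fp[OF s'] bb_facts(1)[OF s' pm]] DP_step[OF s' pm] F(2) rp by simp
    qed
  qed
  have Gi: "inj_on G (perms (Suc m))"
  proof (rule inj_onI)
    fix \<sigma>1 \<sigma>2 assume a1: "\<sigma>1 \<in> perms (Suc m)" and a2: "\<sigma>2 \<in> perms (Suc m)" and e: "G \<sigma>1 = G \<sigma>2"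
    have s1: "\<sigma>1 permutes {1..Suc m}" and s2: "\<sigma>2 permutes {1..Suc m}" using a1 a2 perms_def by auto
    have "G \<sigma>1 (Suc m) = bb m \<sigma>1" "G \<sigma>2 (Suc m) = bb m \<sigma>2"
      unfolding G_def using permutes_not_in[OF Fp[OF s1]] permutes_not_in[OF Fp[OF s2]] by auto
    then have beq: "bb m \<sigma>1 = bb m \<sigma>2" using e by simp
    have "F (rem m \<sigma>1) = F (rem m \<sigma>2)"
    proof
      fix x
      have "Transposition.transpose (Suc m) (bb m \<sigma>1) (F (rem m \<sigma>1) x) = Transposition.transpose (Suc m) (bb m \<sigma>1) (F (rem m \<sigma>2) x)"
        using fun_cong[OF e, of x] beq unfolding G_def by simp
      then show "F (rem m \<sigma>1) x = F (rem m \<sigma>2) x" by (rule injD[OF inj_transpose])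
    qed
    moreover have "rem m \<sigma>1 \<in> perms m" "rem m \<sigma>2 \<in> perms m" using rem_perm s1 s2 perms_def by auto
    ultimately have "rem m \<sigma>1 = rem m \<sigma>2" using F(1) unfolding bij_betw_def by (auto dest: inj_onD)
    then show "\<sigma>1 = \<sigma>2" using rem_inj[OF s1 s2 _ beq] by simp
  qed
  have fin: "finite (perms (Suc m))" unfolding perms_def by (rule finite_permutations) simp
  have "G ` perms (Suc m) = perms (Suc m)" using endo_inj_surj[OF fin _ Gi] Gp by auto
  then have "bij_betw G (perms (Suc m)) (perms (Suc m))" using Gi unfolding bij_betw_def by auto
  then show ?case using Gd by blast
qed

lemma X_alt: "X_set n = {\<sigma> \<in> perms (2*n). \<forall>q\<in>DP (2*n) \<sigma>. even (fst q) \<and> odd (snd q)}"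
  unfolding X_set_def DP_def by auto

lemma R_alt: "R_set n = {\<sigma> \<in> perms (2*n). \<forall>q\<in>DrP (2*n) \<sigma>. even (fst q) \<and> odd (snd q)}"
  unfolding R_set_def DrP_def by auto

theorem mainTheorem5:
  fixes n :: nat
  assumes "n \<ge> 1"
  shows "\<exists>f. bij_betw f (X_set n) (R_set n) \<and>
              (\<forall>\<sigma> \<in> X_set n. drop_num (2*n) (f \<sigma>) = des (2*n) \<sigma>)"
proof -
  obtain F where F: "bij_betw F (perms (2*n)) (perms (2*n))" "\<forall>\<sigma>\<in>perms (2*n). DrP (2*n) (F \<sigma>) = DP (2*n) \<sigma>"
    using main_bij by blast
  have sub: "X_set n \<subseteq> perms (2*n)" unfolding X_set_def by auto
  have img: "F ` X_set n = R_set n"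
  proof
    show "F ` X_set n \<subseteq> R_set n"
      using F sub unfolding X_alt R_alt bij_betw_def by auto
  next
    show "R_set n \<subseteq> F ` X_set n"
    proof
      fix \<tau> assume t: "\<tau> \<in> R_set n"
      then have "\<tau> \<in> perms (2*n)" unfolding R_set_def by auto
      then obtain \<sigma> where s: "\<sigma> \<in> perms (2*n)" "\<tau> = F \<sigma>" using F(1) unfolding bij_betw_def by auto
      then have "\<sigma> \<in> X_set n" using t F(2) unfolding X_alt R_alt by auto
      then show "\<tau> \<in> F ` X_set n" using s by auto
    qed
  qed
  have "bij_betw F (X_set n) (R_set n)" using bij_betw_subset[OF F(1) sub img] .
  moreover have "\<forall>\<sigma> \<in> X_set n. drop_num (2*n) (F \<sigma>) = des (2*n) \<sigma>"
  proof
    fix \<sigma> assume "\<sigma> \<in> X_set n"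
    then have s: "\<sigma> \<in> perms (2*n)" using sub by auto
    then have "inj \<sigma>" unfolding perms_def using permutes_inj by auto
    then show "drop_num (2*n) (F \<sigma>) = des (2*n) \<sigma>"
      using card_DP card_DrP F(2) s by metis
  qed
  ultimately show ?thesis by blast
qed

end
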